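(* For every $1<p<\infty$ there exists an Orlicz function $\Phi_p$ on $[0,\infty)$ such that $C_{\Phi_p}^\infty\cong\{t^p\}$ and $E_{\Phi_p}^\infty\not\equiv\{t^p\}$.
   Context: An Orlicz function is an increasing convex function $F$ on $[0,\infty)$ with $F(0)=0$ and $\lim_{t\to\infty}F(t)=\infty$. For an Orlicz function $F$ and $A>0$, let $E_{F,A}^\infty$ be the closure in $C[0,1]$ of the set of functions $\{x\mapsto F(xy)/F(y):\ y>A\}$ (on $[0,1]$); set $E_F^\infty:=\bigcap_{A>0}E_{F,A}^\infty$ and $C_F^\infty:=\overline{\mathrm{conv}\,E_F^\infty}$ (closure in $C[0,1]$ of the convex hull). For a set $S$ of functions on $[0,1]$ and a function $\varphi$ on $[0,1]$, write $S\cong\{\varphi\}$ if for every $H\in S$ there is $C=C(H)>0$ with $C^{-1}\varphi(t)\le H(t)\le C\varphi(t)$ for all $0<t\le 1$; write $S\equiv\{\varphi\}$ if one constant $C$ works for all $H\in S$. *)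

theory Defs
  imports "HOL-Analysis.Analysis"
begin

definition orlicz :: "(real \<Rightarrow> real) \<Rightarrow> bool" where
  "orlicz F \<longleftrightarrow> mono_on {0..} F \<and> convex_on {0..} F \<and> F 0 = 0 \<and> filterlim F at_top at_top"

text \<open>Elements of C[0,1] are represented as functions real => real that are continuous
  on [0,1] and vanish outside [0,1]; restr01 cuts a function down to [0,1].\<close>
definition restr01 :: "(real \<Rightarrow> real) \<Rightarrow> real \<Rightarrow> real" where
  "restr01 f = (\<lambda>x. if x \<in> {0..1} then f x else 0)"

definition C01 :: "(real \<Rightarrow> real) set" where
  "C01 = {H. continuous_on {0..1} H \<and> (\<forall>x. x \<notin> {0..1} \<longrightarrow> H x = 0)}"

definition sup_closure :: "(real \<Rightarrow> real) set \<Rightarrow> (real \<Rightarrow> real) set" where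
  "sup_closure S = {H \<in> C01. \<forall>\<epsilon>>0. \<exists>g\<in>S. \<forall>x\<in>{0..1}. \<bar>H x - g x\<bar> < \<epsilon>}"

definition conv_hull_fun :: "(real \<Rightarrow> real) set \<Rightarrow> (real \<Rightarrow> real) set" where
  "conv_hull_fun S = {(\<lambda>x. \<Sum>i<n. c i * f i x) | (n::nat) c f.
      (\<forall>i<n. c i \<ge> 0 \<and> f i \<in> S) \<and> (\<Sum>i<n. c i) = 1}"

definition E_FA :: "(real \<Rightarrow> real) \<Rightarrow> real \<Rightarrow> (real \<Rightarrow> real) set" where
  "E_FA F A = sup_closure {restr01 (\<lambda>x. F (x * y) / F y) | y. y > A}"

definition E_F :: "(real \<Rightarrow> real) \<Rightarrow> (real \<Rightarrow> real) set" where
  "E_F F = (\<Inter>A\<in>{0<..}. E_FA F A)"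

definition C_F :: "(real \<Rightarrow> real) \<Rightarrow> (real \<Rightarrow> real) set" where
  "C_F F = sup_closure (conv_hull_fun (E_F F))"

text \<open>S \<cong> {phi}: each H in S is equivalent to phi on (0,1] with its own constant.\<close>
definition equiv_each :: "(real \<Rightarrow> real) set \<Rightarrow> (real \<Rightarrow> real) \<Rightarrow> bool" where
  "equiv_each S \<phi> \<longleftrightarrow> (\<forall>H\<in>S. \<exists>C>0. \<forall>t\<in>{0<..1}. \<phi> t / C \<le> H t \<and> H t \<le> C * \<phi> t)"

text \<open>S \<equiv> {phi}: one constant works for all H in S.\<close>
definition equiv_unif :: "(real \<Rightarrow> real) set \<Rightarrow> (real \<Rightarrow> real) \<Rightarrow> bool" where
  "equiv_unif S \<phi> \<longleftrightarrow> (\<exists>C>0. \<forall>H\<in>S. \<forall>t\<in>{0<..1}. \<phi> t / C \<le> H t \<and> H t \<le> C * \<phi> t)"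

end

theory Submission
  imports Defs "HOL-Library.Nat_Bijection"
begin


definition mk :: "nat \<Rightarrow> nat" where "mk k = Suc (fst (prod_decode k))"
definition aa :: "nat \<Rightarrow> real" where "aa k = (1/2)^(mk k)"
definition nb :: "nat \<Rightarrow> nat" where "nb k = mk k * 2^(mk k)"
definition gl :: "nat \<Rightarrow> nat" where "gl k = k + 1"
fun SS :: "nat \<Rightarrow> nat" where "SS 0 = 0" | "SS (Suc k) = SS k + gl k + nb k"
definition alpha :: "nat \<Rightarrow> real" where
  "alpha i = (\<Sum>k<Suc i. if SS k + gl k \<le> i \<and> i < SS (Suc k) then aa k else 0)"
definition V :: "nat \<Rightarrow> real" where "V n = (\<Sum>i<n. alpha i)"
definition w :: "nat \<Rightarrow> real" where "w j = (if j = 0 then 1 else 2 powr V j - 2 powr V (j-1))"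

lemma nb_pos: "1 \<le> nb k"
proof -
  have "1 \<le> mk k" "1 \<le> (2::nat)^(mk k)" unfolding mk_def by auto
  then show ?thesis unfolding nb_def by (metis mult_le_mono nat_mult_1)
qed
lemma SS_mono: "k1 \<le> k2 \<Longrightarrow> SS k1 \<le> SS k2"
  by (induction k2) (auto simp: le_Suc_eq)
lemma SS_Suc_gt: "SS k + gl k < SS (Suc k)" using nb_pos[of k] by simp
lemma SS_ge: "k \<le> SS k"
  by (induction k) (auto simp: gl_def)
lemma aa_pos: "0 < aa k" unfolding aa_def by simp
lemma aa_le_half: "aa k \<le> 1/2"
proof -
  have "(1/2::real)^(mk k) \<le> (1/2)^1" unfolding mk_def by (intro power_decreasing) auto
  then show ?thesis unfolding aa_def by simp
qed
lemma aa_nb: "aa k * nb k = mk k"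
  unfolding aa_def nb_def by (simp add: power_divide)

lemma alpha_blk:
  assumes "SS k + gl k \<le> i" "i < SS (Suc k)"
  shows "alpha i = aa k"
proof -
  have kle: "k < Suc i" using SS_ge[of k] assms by simp
  have "\<And>k'. (SS k' + gl k' \<le> i \<and> i < SS (Suc k')) \<longleftrightarrow> k' = k"
  proof
    fix k' assume h: "SS k' + gl k' \<le> i \<and> i < SS (Suc k')"
    show "k' = k"
    proof (rule ccontr)
      assume "k' \<noteq> k"
      then consider "k' < k" | "k < k'" by linarith
      then show False
      proof cases
        case 1 then have "SS (Suc k') \<le> SS k" by (intro SS_mono) simp
        then show False using h assms by simp
      next
        case 2 then have "SS (Suc k) \<le> SS k'" by (intro SS_mono) simp
        then show False using h assms by simp
      qed
    qed
  qed (use assms in auto)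
  then have "alpha i = (\<Sum>k'<Suc i. if k' = k then aa k else 0)" unfolding alpha_def
    by (intro sum.cong) auto
  also have "\<dots> = aa k" using kle by simp
  finally show ?thesis .
qed

lemma alpha_gap:
  assumes "SS k \<le> i" "i < SS k + gl k"
  shows "alpha i = 0"
proof -
  have "\<And>k'. \<not>(SS k' + gl k' \<le> i \<and> i < SS (Suc k'))"
  proof
    fix k' assume h: "SS k' + gl k' \<le> i \<and> i < SS (Suc k')"
    consider "k' < k" | "k' = k" | "k < k'" by linarith
    then show False
    proof cases
      case 1 then have "SS (Suc k') \<le> SS k" by (intro SS_mono) simp
      then show False using h assms by simp
    next
      case 2 then show False using h assms by simp
    next
      case 3 then have "SS (Suc k) \<le> SS k'" by (intro SS_mono) simp
      then show False using h assms SS_Suc_gt[of k] by simp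
    qed
  qed
  then show ?thesis unfolding alpha_def by (intro sum.neutral) auto
qed

lemma alpha_nonneg: "0 \<le> alpha i"
  unfolding alpha_def using aa_pos by (intro sum_nonneg) (auto simp: less_imp_le)

lemma V_diff: "m1 \<le> m2 \<Longrightarrow> V m2 - V m1 = (\<Sum>i\<in>{m1..<m2}. alpha i)"
proof -
  assume h: "m1 \<le> m2"
  have "V m2 = (\<Sum>i\<in>{0..<m1}. alpha i) + (\<Sum>i\<in>{m1..<m2}. alpha i)"
    unfolding V_def atLeast0LessThan[symmetric] using h by (simp add: sum.atLeastLessThan_concat)
  then show ?thesis unfolding V_def atLeast0LessThan[symmetric] by simp
qed

lemma V_mono: "m1 \<le> m2 \<Longrightarrow> V m1 \<le> V m2"
  using V_diff[of m1 m2] sum_nonneg[of "{m1..<m2}" alpha] alpha_nonneg by simp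

lemma w_nonneg: "0 \<le> w j"
  unfolding w_def using V_mono[of "j-1" j] by auto

lemma wsum: "(\<Sum>j<Suc n. w j) = 2 powr V n"
proof (induction n)
  case 0 then show ?case by (simp add: w_def V_def)
next
  case (Suc n) then show ?case by (simp add: w_def)
qed

lemma zone_bound:
  assumes "SS k \<le> m1" "m1 \<le> m2" "m2 \<le> SS (Suc k) + gl (Suc k)"
  shows "V m2 - V m1 \<le> real (m2 - m1) * aa k \<and> V m2 - V m1 \<le> real (mk k)"
proof -
  define B where "B = {SS k + gl k..<SS (Suc k)}"
  have al: "\<And>i. i \<in> {m1..<m2} \<Longrightarrow> alpha i \<le> (if i \<in> B then aa k else 0)"
  proof -
    fix i assume i: "i \<in> {m1..<m2}"
    have "i < SS k + gl k \<or> i \<in> B \<or> SS (Suc k) \<le> i" unfolding B_def atLeastLessThan_iff by linarith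
    then consider "i < SS k + gl k" | "i \<in> B" | "SS (Suc k) \<le> i" by blast
    then show "alpha i \<le> (if i \<in> B then aa k else 0)"
    proof cases
      case 1 then show ?thesis using alpha_gap[of k i] i assms unfolding B_def by auto
    next
      case 2 then show ?thesis using alpha_blk[of k i] unfolding B_def by auto
    next
      case 3 then have "alpha i = 0" using alpha_gap[of "Suc k" i] i assms by auto
      moreover have "i \<notin> B" using 3 unfolding B_def by auto
      ultimately show ?thesis by simp
    qed
  qed
  have "V m2 - V m1 \<le> (\<Sum>i\<in>{m1..<m2}. (if i \<in> B then aa k else 0))"
    unfolding V_diff[OF assms(2)] using al by (intro sum_mono) auto
  also have "\<dots> = (\<Sum>i\<in>{m1..<m2} \<inter> B. aa k)" by (simp add: sum.If_cases)
  also have "\<dots> = real (card ({m1..<m2} \<inter> B)) * aa k" by simp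
  finally have s: "V m2 - V m1 \<le> real (card ({m1..<m2} \<inter> B)) * aa k" .
  have c1: "card ({m1..<m2} \<inter> B) \<le> m2 - m1" using card_mono[of "{m1..<m2}" "{m1..<m2} \<inter> B"] by auto
  have c2: "card ({m1..<m2} \<inter> B) \<le> nb k"
    using card_mono[of B "{m1..<m2} \<inter> B"] unfolding B_def by auto
  have "real (card ({m1..<m2} \<inter> B)) * aa k \<le> real (m2 - m1) * aa k"
    using c1 aa_pos[of k] by (intro mult_right_mono) auto
  moreover have "real (card ({m1..<m2} \<inter> B)) * aa k \<le> real (nb k) * aa k"
    using c2 aa_pos[of k] by (intro mult_right_mono) auto
  ultimately show ?thesis using s aa_nb[of k] by (simp add: mult.commute)
qed

lemma zone_exists:
  assumes "SS k0 + gl k0 \<le> N"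
  shows "\<exists>k\<ge>k0. SS k + gl k \<le> N \<and> N < SS (Suc k) + gl (Suc k)"
proof -
  define K where "K = {k. SS k + gl k \<le> N}"
  have "K \<subseteq> {..N}"
  proof
    fix k assume "k \<in> K"
    then have "SS k + gl k \<le> N" by (simp add: K_def)
    then show "k \<in> {..N}" using SS_ge[of k] by simp
  qed
  then have fin: "finite K" using finite_subset by blast
  have k0: "k0 \<in> K" using assms unfolding K_def by simp
  define k where "k = Max K"
  have kK: "k \<in> K" using fin k0 unfolding k_def by (intro Max_in) auto
  have kge: "k0 \<le> k" using fin k0 unfolding k_def by simp
  have "Suc k \<notin> K" using fin unfolding k_def by (metis Max_ge Suc_n_not_le_n)
  then show ?thesis using kK kge unfolding K_def by (intro exI[of _ k]) auto
qed

definition am :: "nat \<Rightarrow> real" where "am m = (1/2)^m"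
definition nm :: "nat \<Rightarrow> nat" where "nm m = m * 2^m"
definition tau :: "nat \<Rightarrow> nat \<Rightarrow> real" where "tau m i = 2 powr (am m * (i+1)) - 2 powr (am m * i)"

lemma aa_am: "aa k = am (mk k)" unfolding aa_def am_def by simp
lemma nb_nm: "nb k = nm (mk k)" unfolding nb_def nm_def by simp

lemma tau_nonneg: "0 \<le> tau m i" unfolding tau_def am_def by simp

lemma tau_sum: "(\<Sum>i<K. tau m i) = 2 powr (am m * K) - 1"
  by (induction K) (auto simp: tau_def)

lemma V_gap:
  assumes "SS k \<le> j" "j \<le> SS k + gl k"
  shows "V j = V (SS k)"
proof -
  have "V j - V (SS k) = (\<Sum>i\<in>{SS k..<j}. alpha i)" using V_diff assms by simp
  also have "\<dots> = 0" using assms by (intro sum.neutral) (auto intro: alpha_gap)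
  finally show ?thesis by simp
qed

lemma V_blk:
  assumes "i \<le> nb k"
  shows "V (SS k + gl k + i) = V (SS k + gl k) + aa k * real i"
proof -
  have "V (SS k + gl k + i) - V (SS k + gl k) = (\<Sum>j\<in>{SS k + gl k..<SS k + gl k + i}. alpha j)" using V_diff by simp
  also have "\<dots> = (\<Sum>j\<in>{SS k + gl k..<SS k + gl k + i}. aa k)" using assms
    by (intro sum.cong refl alpha_blk) auto
  also have "\<dots> = aa k * real i" by simp
  finally show ?thesis by simp
qed

lemma w_gap:
  assumes "SS k < j" "j \<le> SS k + gl k"
  shows "w j = 0"
proof -
  have "V j = V (SS k)" "V (j-1) = V (SS k)" using assms by (auto intro!: V_gap)
  then show ?thesis using assms unfolding w_def by simp
qed

lemma w_blk:
  assumes "i < nb k"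
  shows "w (Suc (SS k + gl k + i)) = 2 powr V (SS k + gl k) * tau (mk k) i"
proof -
  have "V (Suc (SS k + gl k + i)) = V (SS k + gl k) + aa k * real (Suc i)"
    using V_blk[of "Suc i" k] assms by simp
  moreover have "V (SS k + gl k + i) = V (SS k + gl k) + aa k * real i" using V_blk[of i k] assms by simp
  ultimately show ?thesis unfolding w_def tau_def aa_am
    by (simp add: powr_add algebra_simps)
qed

lemma wsum_old: "(\<Sum>j<Suc (SS k). w j) = 2 powr V (SS k + gl k)"
  using wsum[of "SS k"] V_gap[of k "SS k + gl k"] by simp

lemma approx_core:
  fixes c0 q0 Y0 X Y e1 :: real
  assumes c0: "0 < c0" and q: "0 \<le> q0" "q0 \<le> Y0" and Y0: "0 < Y0" and e: "0 \<le> e1" "e1 \<le> 1/2"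
    and X: "c0 * (q0 - e1 * Y0) \<le> X" "X \<le> c0 * q0" "0 \<le> X" and Y: "c0 * (Y0 - e1 * Y0) \<le> Y" "Y \<le> c0 * Y0"
  shows "\<bar>X / Y - q0 / Y0\<bar> \<le> 2 * e1"
proof -
  have "e1 * Y0 \<le> (1/2) * Y0" using e Y0 by (intro mult_right_mono) auto
  then have Yd: "0 < Y0 - e1 * Y0" using Y0 by linarith
  then have Yl: "0 < c0 * (Y0 - e1 * Y0)" using c0 by simp
  then have Yp: "0 < Y" using Y by linarith
  have r: "q0 / Y0 \<le> 1" using q Y0 by simp
  have r0: "0 \<le> q0 / Y0" using q Y0 by simp
  have up: "X / Y \<le> q0 / Y0 + 2 * e1"
  proof -
    have "X / Y \<le> (c0 * q0) / (c0 * (Y0 - e1 * Y0))"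
      using X Y Yl c0 q by (intro frac_le) auto
    also have "\<dots> = (q0 / Y0) / (1 - e1)" using c0 Y0 e by (simp add: field_simps)
    also have "\<dots> \<le> q0 / Y0 + 2 * e1"
    proof -
      have "(q0/Y0) * e1 \<le> 1 * e1" using r e by (intro mult_right_mono) auto
      also have "\<dots> = e1 * 1" by simp
      also have "\<dots> \<le> e1 * (2 * (1 - e1))" using e by (intro mult_left_mono) auto
      also have "\<dots> = 2 * e1 * (1 - e1)" by simp
      finally have h: "(q0/Y0) * e1 \<le> 2 * e1 * (1 - e1)" .
      have "q0 / Y0 \<le> (q0 / Y0 + 2 * e1) * (1 - e1)"
      proof -
        define Q where "Q = q0 / Y0"
        have "Q * e1 \<le> 2 * e1 * (1 - e1)" using h by (simp add: Q_def)
        then have "Q \<le> (Q + 2 * e1) * (1 - e1)" by (simp add: algebra_simps)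
        then show ?thesis by (simp add: Q_def)
      qed
      moreover have "0 < 1 - e1" using e by simp
      ultimately show ?thesis by (simp only: pos_divide_le_eq)
    qed
    finally show ?thesis .
  qed
  have lo: "q0 / Y0 - e1 \<le> X / Y"
  proof (cases "q0 - e1 * Y0 \<le> 0")
    case True
    then have "q0 / Y0 \<le> e1" using Y0 by (simp add: divide_le_eq)
    moreover have "0 \<le> X / Y" using X Yp by simp
    ultimately show ?thesis by linarith
  next
    case False
    have "(c0 * (q0 - e1 * Y0)) / (c0 * Y0) \<le> X / Y"
      using X Y Yp False c0 by (intro frac_le) auto
    moreover have "(c0 * (q0 - e1 * Y0)) / (c0 * Y0) = q0 / Y0 - e1" using c0 Y0 by (simp add: field_simps)
    ultimately show ?thesis by simp
  qed
  show ?thesis using up lo e by linarith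
qed


context fixes p :: real assumes p1: "1 < p"
begin

definition kap :: real where "kap = 1 / 2 powr (p + 1)"
definition RR :: "real \<Rightarrow> real \<Rightarrow> real" where "RR a x = kap * x powr p * max a (1 + a * ln x)"

lemma kap_pos: "0 < kap" unfolding kap_def by simp
lemma kap_le1: "kap \<le> 1" unfolding kap_def using p1 by (simp add: ge_one_powr_ge_zero)

lemma Q_closed:
  assumes "\<And>e. e > 0 \<Longrightarrow> \<exists>g a. a \<in> {0..1} \<and> (\<forall>x\<in>{0..1}. \<bar>H x - g x\<bar> < e) \<and> (\<forall>x\<in>{0<..1}. RR a x - e \<le> g x)"
  shows "\<exists>a\<in>{0..1}. \<forall>x\<in>{0<..1}. RR a x \<le> H x"
proof -
  have "\<forall>n. \<exists>a. a \<in> {0..1} \<and> (\<forall>x\<in>{0<..1}. RR a x - 2/Suc n \<le> H x)"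
  proof
    fix n :: nat
    obtain g a where ga: "a \<in> {0..1}" "\<forall>x\<in>{0..1}. \<bar>H x - g x\<bar> < 1/Suc n" "\<forall>x\<in>{0<..1}. RR a x - 1/Suc n \<le> g x"
      using assms[of "1/Suc n"] by auto
    show "\<exists>a. a \<in> {0..1} \<and> (\<forall>x\<in>{0<..1}. RR a x - 2/Suc n \<le> H x)"
    proof (intro exI conjI ballI)
      fix x :: real assume x: "x \<in> {0<..1}"
      then have "\<bar>H x - g x\<bar> < 1/Suc n" "RR a x - 1/Suc n \<le> g x" using ga by auto
      moreover have "2/real (Suc n) = 1/Suc n + 1/Suc n" by simp
      ultimately show "RR a x - 2/Suc n \<le> H x" by linarith
    qed (use ga in auto)
  qed
  then obtain a where a1: "\<And>n. a n \<in> {0..1}" and a2: "\<And>n x. x\<in>{0<..1} \<Longrightarrow> RR (a n) x - 2/Suc n \<le> H x"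
    by metis
  have sc: "seq_compact {0..1::real}" by (rule compact_imp_seq_compact) simp
  obtain l r where l: "l \<in> {0..1}" "strict_mono r" "(a \<circ> r) \<longlonglongrightarrow> l"
    using seq_compactE[OF sc, of a] a1 by metis
  show ?thesis
  proof (intro bexI[of _ l] ballI)
    fix x :: real assume x: "x \<in> {0<..1}"
    have t1: "(\<lambda>n. RR (a (r n)) x) \<longlonglongrightarrow> RR l x"
      unfolding RR_def using l(3) unfolding comp_def by (intro tendsto_intros) auto
    have t0: "(\<lambda>n. 2 / real (Suc n)) \<longlonglongrightarrow> 0"
      using LIMSEQ_Suc[OF lim_const_over_n[of 2]] by simp
    have t2: "(\<lambda>n. 2 / real (Suc (r n))) \<longlonglongrightarrow> 0"
      using LIMSEQ_subseq_LIMSEQ[OF t0 l(2)] by (simp add: comp_def)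
    have "(\<lambda>n. RR (a (r n)) x - 2 / real (Suc (r n))) \<longlonglongrightarrow> RR l x - 0"
      by (intro tendsto_diff t1 t2)
    then have "(\<lambda>n. RR (a (r n)) x - 2 / real (Suc (r n))) \<longlonglongrightarrow> RR l x" by simp
    then show "RR l x \<le> H x"
      by (rule LIMSEQ_le_const2) (use a2 x in auto)
  qed (rule l(1))
qed

lemma EF_props:
  assumes P1: "\<And>y x. y > 1 \<Longrightarrow> x \<in> {0..1} \<Longrightarrow> 0 \<le> F (x*y)/F y \<and> F (x*y)/F y \<le> x powr p"
  and P2: "\<And>e. e>0 \<Longrightarrow> \<exists>A>1. \<forall>y>A. \<exists>a\<in>{0..1}. \<forall>x\<in>{0<..1}. RR a x - e \<le> F (x*y)/F y"
  and H: "H \<in> E_F F"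
  shows "(\<forall>x\<in>{0..1}. 0 \<le> H x \<and> H x \<le> x powr p) \<and> (\<exists>a\<in>{0..1}. \<forall>x\<in>{0<..1}. RR a x \<le> H x)"
proof -
  have HA: "\<And>A. A > 0 \<Longrightarrow> H \<in> E_FA F A" using H unfolding E_F_def by auto
  have approx: "\<And>A e. A > 0 \<Longrightarrow> e > 0 \<Longrightarrow> \<exists>y>A. \<forall>x\<in>{0..1}. \<bar>H x - F (x*y)/F y\<bar> < e"
  proof -
    fix A e :: real assume A: "A > 0" and e: "e > 0"
    from HA[OF A] have "\<exists>g\<in>{restr01 (\<lambda>x. F (x * y) / F y) |y. y > A}. \<forall>x\<in>{0..1}. \<bar>H x - g x\<bar> < e"
      unfolding E_FA_def sup_closure_def using e by auto
    then obtain y where y: "y > A" "\<forall>x\<in>{0..1}. \<bar>H x - restr01 (\<lambda>x. F (x * y) / F y) x\<bar> < e"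
      by auto
    show "\<exists>y>A. \<forall>x\<in>{0..1}. \<bar>H x - F (x*y)/F y\<bar> < e"
      using y by (intro exI[of _ y]) (auto simp: restr01_def)
  qed
  have bnd: "\<forall>x\<in>{0..1}. 0 \<le> H x \<and> H x \<le> x powr p"
  proof
    fix x :: real assume x: "x \<in> {0..1}"
    have "\<And>e. e > 0 \<Longrightarrow> 0 \<le> H x + e \<and> H x \<le> x powr p + e"
    proof -
      fix e :: real assume e: "e > 0"
      obtain y where y: "y > 1" "\<forall>x\<in>{0..1}. \<bar>H x - F (x*y)/F y\<bar> < e" using approx[of 1 e] e by auto
      have "0 \<le> F (x*y)/F y" "F (x*y)/F y \<le> x powr p" using P1[OF y(1) x] by auto
      moreover have "\<bar>H x - F (x*y)/F y\<bar> < e" using y x by auto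
      ultimately show "0 \<le> H x + e \<and> H x \<le> x powr p + e" by linarith
    qed
    then show "0 \<le> H x \<and> H x \<le> x powr p"
      by (meson field_le_epsilon add.commute le_add_same_cancel1 linorder_not_le order.strict_trans2)
  qed
  have Q: "\<exists>a\<in>{0..1}. \<forall>x\<in>{0<..1}. RR a x \<le> H x"
  proof (rule Q_closed)
    fix e :: real assume e: "e > 0"
    obtain A where A: "A > 1" "\<forall>y>A. \<exists>a\<in>{0..1}. \<forall>x\<in>{0<..1}. RR a x - e \<le> F (x*y)/F y"
      using P2[OF e] by auto
    obtain y where y: "y > A" "\<forall>x\<in>{0..1}. \<bar>H x - F (x*y)/F y\<bar> < e" using approx[of A e] e A by auto
    obtain a where a: "a \<in> {0..1}" "\<forall>x\<in>{0<..1}. RR a x - e \<le> F (x*y)/F y" using A(2) y(1) by auto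
    show "\<exists>g a. a \<in> {0..1} \<and> (\<forall>x\<in>{0..1}. \<bar>H x - g x\<bar> < e) \<and> (\<forall>x\<in>{0<..1}. RR a x - e \<le> g x)"
      using a y by (intro exI[of _ "\<lambda>x. F (x*y)/F y"] exI[of _ a]) auto
  qed
  show ?thesis using bnd Q by blast
qed

lemma max_comb:
  assumes "\<forall>i<n. c i \<ge> (0::real)" "(\<Sum>i<n. c i) = 1"
  shows "max (\<Sum>i<n. c i * a i) (1 + (\<Sum>i<n. c i * a i) * L) \<le> (\<Sum>i<n. c i * max (a i) (1 + a i * L))"
proof -
  have "(\<Sum>i<n. c i * a i) \<le> (\<Sum>i<n. c i * max (a i) (1 + a i * L))"
    using assms(1) by (intro sum_mono mult_left_mono) auto
  moreover have "1 + (\<Sum>i<n. c i * a i) * L = (\<Sum>i<n. c i * (1 + a i * L))"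
    using assms(2) by (simp add: sum.distrib sum_distrib_right sum_distrib_left algebra_simps)
  moreover have "(\<Sum>i<n. c i * (1 + a i * L)) \<le> (\<Sum>i<n. c i * max (a i) (1 + a i * L))"
    using assms(1) by (intro sum_mono mult_left_mono) auto
  ultimately show ?thesis by linarith
qed

lemma conv_props:
  assumes EF: "\<And>H. H \<in> S \<Longrightarrow> (\<forall>x\<in>{0..1}. 0 \<le> H x \<and> H x \<le> x powr p) \<and> (\<exists>a\<in>{0..1}. \<forall>x\<in>{0<..1}. RR a x \<le> H x)"
  and G: "G \<in> conv_hull_fun S"
  shows "(\<forall>x\<in>{0..1}. 0 \<le> G x \<and> G x \<le> x powr p) \<and> (\<exists>a\<in>{0..1}. \<forall>x\<in>{0<..1}. RR a x \<le> G x)"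
proof -
  obtain n :: nat and c :: "nat \<Rightarrow> real" and f where G': "G = (\<lambda>x. \<Sum>i<n. c i * f i x)" and cf: "\<forall>i<n. c i \<ge> 0 \<and> f i \<in> S" and c1: "(\<Sum>i<n. c i) = 1"
    using G unfolding conv_hull_fun_def by blast
  have "\<forall>i<n. \<exists>a. a \<in> {0..1} \<and> (\<forall>x\<in>{0<..1}. RR a x \<le> f i x)" using EF cf by blast
  then obtain a where a: "\<And>i. i < n \<Longrightarrow> a i \<in> {0..1} \<and> (\<forall>x\<in>{0<..1}. RR (a i) x \<le> f i x)" by metis
  define A where "A = (\<Sum>i<n. c i * a i)"
  have A0: "0 \<le> A" unfolding A_def using a cf by (intro sum_nonneg) auto
  have "A \<le> (\<Sum>i<n. c i * 1)" unfolding A_def using a cf by (intro sum_mono mult_left_mono) auto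
  then have A1: "A \<le> 1" using c1 by simp
  have bnd: "\<forall>x\<in>{0..1}. 0 \<le> G x \<and> G x \<le> x powr p"
  proof
    fix x :: real assume x: "x \<in> {0..1}"
    have "0 \<le> (\<Sum>i<n. c i * f i x)" using cf EF x by (intro sum_nonneg) auto
    moreover have "(\<Sum>i<n. c i * f i x) \<le> (\<Sum>i<n. c i * x powr p)" using cf EF x by (intro sum_mono mult_left_mono) auto
    moreover have "(\<Sum>i<n. c i * x powr p) = x powr p" using c1 by (simp add: sum_distrib_right[symmetric])
    ultimately show "0 \<le> G x \<and> G x \<le> x powr p" unfolding G' by simp
  qed
  have Q: "\<forall>x\<in>{0<..1}. RR A x \<le> G x"
  proof
    fix x :: real assume x: "x \<in> {0<..1}"
    have k0: "0 \<le> kap * x powr p" using kap_pos by simp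
    have "RR A x = kap * x powr p * max A (1 + A * ln x)" by (simp add: RR_def)
    also have "\<dots> \<le> kap * x powr p * (\<Sum>i<n. c i * max (a i) (1 + a i * ln x))"
      using max_comb[of n c a "ln x"] cf c1 unfolding A_def by (intro mult_left_mono k0) auto
    also have "\<dots> = (\<Sum>i<n. c i * RR (a i) x)" by (simp add: RR_def sum_distrib_left algebra_simps)
    also have "\<dots> \<le> (\<Sum>i<n. c i * f i x)" using a cf x by (intro sum_mono mult_left_mono) auto
    finally show "RR A x \<le> G x" unfolding G' by simp
  qed
  show ?thesis using bnd Q A0 A1 by auto
qed

lemma CF_props:
  assumes EF: "\<And>H. H \<in> E_F F \<Longrightarrow> (\<forall>x\<in>{0..1}. 0 \<le> H x \<and> H x \<le> x powr p) \<and> (\<exists>a\<in>{0..1}. \<forall>x\<in>{0<..1}. RR a x \<le> H x)"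
  and G: "G \<in> C_F F"
  shows "(\<forall>x\<in>{0..1}. G x \<le> x powr p) \<and> (\<exists>a\<in>{0..1}. \<forall>x\<in>{0<..1}. RR a x \<le> G x)"
proof -
  have ap: "\<And>e. e > 0 \<Longrightarrow> \<exists>g\<in>conv_hull_fun (E_F F). \<forall>x\<in>{0..1}. \<bar>G x - g x\<bar> < e"
    using G unfolding C_F_def sup_closure_def by auto
  have bnd: "\<forall>x\<in>{0..1}. G x \<le> x powr p"
  proof
    fix x :: real assume x: "x \<in> {0..1}"
    have "\<And>e. e > 0 \<Longrightarrow> G x \<le> x powr p + e"
    proof -
      fix e :: real assume e: "e > 0"
      obtain g where g: "g \<in> conv_hull_fun (E_F F)" "\<forall>x\<in>{0..1}. \<bar>G x - g x\<bar> < e" using ap[OF e] by auto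
      have "g x \<le> x powr p" using conv_props[OF EF g(1)] x by auto
      moreover have "\<bar>G x - g x\<bar> < e" using g x by auto
      ultimately show "G x \<le> x powr p + e" by linarith
    qed
    then show "G x \<le> x powr p" by (rule field_le_epsilon)
  qed
  have Q: "\<exists>a\<in>{0..1}. \<forall>x\<in>{0<..1}. RR a x \<le> G x"
  proof (rule Q_closed)
    fix e :: real assume e: "e > 0"
    obtain g where g: "g \<in> conv_hull_fun (E_F F)" "\<forall>x\<in>{0..1}. \<bar>G x - g x\<bar> < e" using ap[OF e] by auto
    obtain a where a: "a \<in> {0..1}" "\<forall>x\<in>{0<..1}. RR a x \<le> g x" using conv_props[OF EF g(1)] by auto
    show "\<exists>g a. a \<in> {0..1} \<and> (\<forall>x\<in>{0..1}. \<bar>G x - g x\<bar> < e) \<and> (\<forall>x\<in>{0<..1}. RR a x - e \<le> g x)"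
      using a g e by (intro exI[of _ g] exI[of _ a]) force
  qed
  show ?thesis using bnd Q by blast
qed

lemma abstract_main:
  assumes orl: "orlicz F"
  and P1: "\<And>y x. y > 1 \<Longrightarrow> x \<in> {0..1} \<Longrightarrow> 0 \<le> F (x*y)/F y \<and> F (x*y)/F y \<le> x powr p"
  and P2: "\<And>e. e>0 \<Longrightarrow> \<exists>A>1. \<forall>y>A. \<exists>a\<in>{0..1}. \<forall>x\<in>{0<..1}. RR a x - e \<le> F (x*y)/F y"
  and P3: "\<And>C. C>0 \<Longrightarrow> \<exists>H\<in>E_F F. \<exists>t\<in>{0<..1}. H t < t powr p / C"
  shows "\<exists>\<Phi>. orlicz \<Phi> \<and> equiv_each (C_F \<Phi>) (\<lambda>t. t powr p) \<and> \<not> equiv_unif (E_F \<Phi>) (\<lambda>t. t powr p)"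
proof (intro exI[of _ F] conjI orl)
  have EF: "\<And>H. H \<in> E_F F \<Longrightarrow> (\<forall>x\<in>{0..1}. 0 \<le> H x \<and> H x \<le> x powr p) \<and> (\<exists>a\<in>{0..1}. \<forall>x\<in>{0<..1}. RR a x \<le> H x)"
    by (rule EF_props[OF P1 P2]) auto
  show "equiv_each (C_F F) (\<lambda>t. t powr p)"
    unfolding equiv_each_def
  proof
    fix G assume G: "G \<in> C_F F"
    obtain a where a: "a \<in> {0..1}" "\<forall>x\<in>{0<..1}. RR a x \<le> G x" and up: "\<forall>x\<in>{0..1}. G x \<le> x powr p"
      using CF_props[OF EF G] by auto
    define b where "b = (if a > 0 then a else 1)"
    have b: "0 < b" "b \<le> 1" using a by (auto simp: b_def)
    have low: "\<And>t. t \<in> {0<..1} \<Longrightarrow> kap * b * t powr p \<le> G t"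
    proof -
      fix t :: real assume t: "t \<in> {0<..1}"
      have "b \<le> max a (1 + a * ln t)"
      proof (cases "a > 0")
        case True then show ?thesis by (simp add: b_def)
      next
        case False then have "a = 0" using a by auto
        then show ?thesis by (simp add: b_def)
      qed
      then have "kap * t powr p * b \<le> kap * t powr p * max a (1 + a * ln t)"
        using kap_pos by (intro mult_left_mono) auto
      moreover have "RR a t \<le> G t" using a(2) t by auto
      ultimately show "kap * b * t powr p \<le> G t" unfolding RR_def by (simp add: algebra_simps)
    qed
    have kb: "0 < kap * b" "kap * b \<le> 1" using kap_pos kap_le1 b by (auto intro: mult_le_one)
    show "\<exists>C>0. \<forall>t\<in>{0<..1}. t powr p / C \<le> G t \<and> G t \<le> C * t powr p"
    proof (intro exI[of _ "1/(kap*b)"] conjI ballI)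
      show "0 < 1/(kap*b)" using kb by simp
      fix t :: real assume t: "t \<in> {0<..1}"
      show "t powr p / (1/(kap*b)) \<le> G t" using low[OF t] by (simp add: algebra_simps)
      have "1 \<le> 1/(kap*b)" using kb by simp
      then have "1 * t powr p \<le> 1/(kap*b) * t powr p" by (intro mult_right_mono) auto
      moreover have "G t \<le> t powr p" using up t by auto
      ultimately show "G t \<le> 1/(kap*b) * t powr p" by linarith
    qed
  qed
  show "\<not> equiv_unif (E_F F) (\<lambda>t. t powr p)"
  proof
    assume "equiv_unif (E_F F) (\<lambda>t. t powr p)"
    then obtain C where C: "C > 0" "\<forall>H\<in>E_F F. \<forall>t\<in>{0<..1}. t powr p / C \<le> H t"
      unfolding equiv_unif_def by auto
    obtain H t where "H \<in> E_F F" "t \<in> {0<..1}" "H t < t powr p / C" using P3[OF C(1)] by auto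
    then show False using C(2) by force
  qed
qed


definition tm :: "nat \<Rightarrow> real \<Rightarrow> real" where "tm j y = w j * (max 0 (y - 2^j)) powr p"
definition Phi :: "real \<Rightarrow> real" where "Phi y = (\<Sum>j<nat \<lceil>y\<rceil>. tm j y)"

lemma tm_nonneg: "0 \<le> tm j y" unfolding tm_def using w_nonneg by simp

lemma tm_zero: "y \<le> 2^j \<Longrightarrow> tm j y = 0" unfolding tm_def by simp

lemma sum_eq_cut:
  fixes a b :: nat
  assumes "\<And>j. j \<ge> a \<Longrightarrow> f j = (0::real)" "\<And>j. j \<ge> b \<Longrightarrow> f j = 0"
  shows "(\<Sum>j<a. f j) = (\<Sum>j<b. f j)"
proof -
  have "(\<Sum>j<a. f j) = (\<Sum>j<max a b. f j)"
    by (rule sum.mono_neutral_left) (use assms(1) in \<open>auto simp: not_less\<close>)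
  also have "\<dots> = (\<Sum>j<b. f j)"
    by (rule sum.mono_neutral_right) (use assms(2) in \<open>auto simp: not_less\<close>)
  finally show ?thesis .
qed

lemma Phi_eq:
  assumes "\<And>j. j \<ge> n \<Longrightarrow> y \<le> 2^j"
  shows "Phi y = (\<Sum>j<n. tm j y)"
  unfolding Phi_def
proof (rule sum_eq_cut)
  fix j assume j: "nat \<lceil>y\<rceil> \<le> j"
  have "y \<le> real j" using j by linarith
  also have "\<dots> \<le> 2^j" using less_exp[of j] by (metis of_nat_less_numeral_power_cancel_iff less_imp_le of_nat_numeral)
  finally show "tm j y = 0" by (rule tm_zero)
qed (use assms tm_zero in auto)

lemma Phi_nonneg: "0 \<le> Phi y" unfolding Phi_def by (intro sum_nonneg tm_nonneg)

lemma Phi_ge_tm0: assumes "1 \<le> y" shows "(max 0 (y - 1)) powr p \<le> Phi y"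
proof -
  have n: "0 < nat \<lceil>y\<rceil>" using assms by linarith
  have "tm 0 y \<le> Phi y" unfolding Phi_def
    using n by (intro member_le_sum tm_nonneg) auto
  then show ?thesis by (simp add: tm_def w_def)
qed

lemma Phi_pos: assumes "1 < y" shows "0 < Phi y"
proof -
  have "0 < (max 0 (y - 1)) powr p" using assms by simp
  moreover have "(max 0 (y - 1)) powr p \<le> Phi y" using Phi_ge_tm0[of y] assms by simp
  ultimately show ?thesis by linarith
qed

lemma powr_comb0:
  assumes "0 \<le> s1" "0 \<le> s2" "0 \<le> t" "t \<le> 1"
  shows "((1 - t) * s1 + t * s2) powr p \<le> (1 - t) * s1 powr p + t * s2 powr p"
proof -
  have tle: "\<And>u::real. 0 \<le> u \<Longrightarrow> u \<le> 1 \<Longrightarrow> u powr p \<le> u"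
  proof -
    fix u :: real assume "0 \<le> u" "u \<le> 1"
    then have "u powr p \<le> u powr 1" using p1 by (intro powr_mono') auto
    then show "u powr p \<le> u" using \<open>0 \<le> u\<close> by (cases "u = 0") auto
  qed
  consider "s1 = 0" | "s2 = 0" | "0 < s1 \<and> 0 < s2" using assms by linarith
  then show ?thesis
  proof cases
    case 1
    have "(t * s2) powr p = t powr p * s2 powr p" using assms by (simp add: powr_mult)
    also have "\<dots> \<le> t * s2 powr p" using tle[of t] assms by (intro mult_right_mono) auto
    finally show ?thesis using 1 by simp
  next
    case 2
    have "((1-t) * s1) powr p = (1-t) powr p * s1 powr p" using assms by (simp add: powr_mult)
    also have "\<dots> \<le> (1-t) * s1 powr p" using tle[of "1-t"] assms by (intro mult_right_mono) auto
    finally show ?thesis using 2 by simp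
  next
    case 3
    have "convex_on {0<..} (\<lambda>x. x powr p)" using p1 by (intro powr_convex) simp
    from convex_onD[OF this, of t s1 s2] 3 assms show ?thesis by simp
  qed
qed

lemma hinge_convex:
  fixes t x y b :: real
  assumes "0 \<le> t" "t \<le> 1"
  shows "max 0 ((1 - t) * x + t * y - b) \<le> (1 - t) * max 0 (x - b) + t * max 0 (y - b)"
proof -
  have "(1 - t) * x + t * y - b = (1 - t) * (x - b) + t * (y - b)" by (simp add: algebra_simps)
  moreover have "(1 - t) * (x - b) \<le> (1 - t) * max 0 (x - b)" using assms by (intro mult_left_mono) auto
  moreover have "t * (y - b) \<le> t * max 0 (y - b)" using assms by (intro mult_left_mono) auto
  moreover have "0 \<le> (1 - t) * max 0 (x - b) + t * max 0 (y - b)" using assms by simp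
  ultimately show ?thesis by linarith
qed

lemma tm_convex:
  assumes "0 \<le> t" "t \<le> 1"
  shows "tm j ((1 - t) * x + t * y) \<le> (1 - t) * tm j x + t * tm j y"
proof -
  have "(max 0 ((1 - t) * x + t * y - 2^j)) powr p \<le> ((1 - t) * max 0 (x - 2^j) + t * max 0 (y - 2^j)) powr p"
    using hinge_convex[OF assms] p1 by (intro powr_mono2) auto
  also have "\<dots> \<le> (1 - t) * (max 0 (x - 2^j)) powr p + t * (max 0 (y - 2^j)) powr p"
    using assms by (intro powr_comb0) auto
  finally have "w j * (max 0 ((1 - t) * x + t * y - 2^j)) powr p \<le> w j * ((1 - t) * (max 0 (x - 2^j)) powr p + t * (max 0 (y - 2^j)) powr p)"
    using w_nonneg by (intro mult_left_mono) auto
  then show ?thesis unfolding tm_def by (simp add: algebra_simps)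
qed

lemma tm_mono: "x \<le> y \<Longrightarrow> tm j x \<le> tm j y"
  unfolding tm_def using p1 w_nonneg by (intro mult_left_mono powr_mono2) auto

lemma cut_ok: "(y::real) \<le> z \<Longrightarrow> nat \<lceil>z\<rceil> \<le> j \<Longrightarrow> y \<le> 2^j"
proof -
  assume "y \<le> z" "nat \<lceil>z\<rceil> \<le> j"
  then have "y \<le> real j" by linarith
  also have "\<dots> \<le> 2^j" using less_exp[of j] by (metis of_nat_less_numeral_power_cancel_iff less_imp_le of_nat_numeral)
  finally show "y \<le> 2^j" .
qed

lemma Phi_orlicz: "orlicz Phi"
  unfolding orlicz_def
proof (intro conjI)
  show "mono_on {0..} Phi"
  proof (rule mono_onI)
    fix x y :: real assume "x \<in> {0..}" "y \<in> {0..}" "x \<le> y"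
    then have "Phi x = (\<Sum>j<nat \<lceil>y\<rceil>. tm j x)" "Phi y = (\<Sum>j<nat \<lceil>y\<rceil>. tm j y)"
      using cut_ok by (auto intro!: Phi_eq)
    then show "Phi x \<le> Phi y" using \<open>x \<le> y\<close> by (simp add: sum_mono tm_mono)
  qed
  show "convex_on {0..} Phi"
  proof (rule convex_onI)
    fix t x y :: real assume t: "0 < t" "t < 1" and xy: "x \<in> {0..}" "y \<in> {0..}"
    define z where "z = max x y"
    have m: "(1 - t) * x + t * y \<le> z"
    proof -
      have "(1 - t) * x \<le> (1 - t) * z" "t * y \<le> t * z" using t by (auto simp: z_def intro: mult_left_mono)
      then show ?thesis by (simp add: algebra_simps)
    qed
    have e1: "Phi ((1 - t) * x + t * y) = (\<Sum>j<nat \<lceil>z\<rceil>. tm j ((1 - t) * x + t * y))"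
      using m cut_ok by (intro Phi_eq) blast
    have e2: "Phi x = (\<Sum>j<nat \<lceil>z\<rceil>. tm j x)" "Phi y = (\<Sum>j<nat \<lceil>z\<rceil>. tm j y)"
      using cut_ok[of x z] cut_ok[of y z] by (auto simp: z_def intro!: Phi_eq)
    have "(\<Sum>j<nat \<lceil>z\<rceil>. tm j ((1 - t) * x + t * y)) \<le> (\<Sum>j<nat \<lceil>z\<rceil>. (1 - t) * tm j x + t * tm j y)"
      using t by (intro sum_mono tm_convex) auto
    then show "Phi ((1 - t) *\<^sub>R x + t *\<^sub>R y) \<le> (1 - t) * Phi x + t * Phi y"
      using e1 e2 by (simp add: sum.distrib sum_distrib_left)
  qed simp
  show "Phi 0 = 0" unfolding Phi_def by simp
  show "filterlim Phi at_top at_top"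
  proof (rule filterlim_at_top_mono)
    have "filterlim (\<lambda>y::real. -1 + y) at_top (at_top::real filter)"
      by (rule filterlim_tendsto_add_at_top) (auto intro: filterlim_ident)
    then show "filterlim (\<lambda>y::real. y - (1::real)) at_top at_top" by (simp add: add.commute)
    show "\<forall>\<^sub>F y in at_top. y - 1 \<le> Phi y"
    proof (rule eventually_at_top_linorderI[of 2])
      fix y :: real assume y: "2 \<le> y"
      have "y - 1 = (y - 1) powr 1" using y by simp
      also have "\<dots> \<le> (y - 1) powr p" using y p1 by (intro powr_mono) auto
      also have "\<dots> = (max 0 (y - 1)) powr p" using y by simp
      also have "\<dots> \<le> Phi y" using y by (intro Phi_ge_tm0) simp
      finally show "y - 1 \<le> Phi y" .
    qed
  qed
qed

lemma hinge_scale: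
  fixes x y b :: real
  assumes "0 \<le> x" "x \<le> 1" "0 \<le> b"
  shows "max 0 (x * y - b) \<le> x * max 0 (y - b)"
proof (cases "y \<le> b")
  case True
  have "x * y \<le> x * b" using True assms by (intro mult_left_mono) auto
  also have "\<dots> \<le> b" using assms by (simp add: mult_le_cancel_right1 mult_left_le_one_le)
  finally show ?thesis using assms by simp
next
  case False
  have "x * b \<le> b" using assms by (simp add: mult_left_le_one_le)
  then have "x * y - b \<le> x * (y - b)" by (simp add: algebra_simps)
  then show ?thesis using False assms by simp
qed

lemma tm_scale:
  assumes "0 \<le> x" "x \<le> 1"
  shows "tm j (x * y) \<le> x powr p * tm j y"
proof -
  have "(max 0 (x * y - 2^j)) powr p \<le> (x * max 0 (y - 2^j)) powr p"
    using hinge_scale[OF assms, of "2^j" y] p1 by (intro powr_mono2) auto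
  also have "\<dots> = x powr p * (max 0 (y - 2^j)) powr p" using assms by (simp add: powr_mult)
  finally show ?thesis unfolding tm_def using w_nonneg
    by (metis (no_types, lifting) mult.left_commute mult_left_mono)
qed

lemma P1:
  assumes "1 < y" "x \<in> {0..1}"
  shows "0 \<le> Phi (x*y)/Phi y \<and> Phi (x*y)/Phi y \<le> x powr p"
proof -
  have xy: "x * y \<le> y" using assms by (simp add: mult_left_le_one_le)
  have e1: "Phi (x*y) = (\<Sum>j<nat \<lceil>y\<rceil>. tm j (x*y))" using xy cut_ok by (intro Phi_eq) blast
  have e2: "Phi y = (\<Sum>j<nat \<lceil>y\<rceil>. tm j y)" using cut_ok by (intro Phi_eq) blast
  have "Phi (x*y) \<le> (\<Sum>j<nat \<lceil>y\<rceil>. x powr p * tm j y)" unfolding e1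
    using assms by (intro sum_mono tm_scale) auto
  also have "\<dots> = x powr p * Phi y" unfolding e2 by (simp add: sum_distrib_left)
  finally have "Phi (x*y) \<le> x powr p * Phi y" .
  moreover have "0 < Phi y" using Phi_pos assms by simp
  ultimately show ?thesis using Phi_nonneg[of "x*y"] by (simp add: divide_le_eq)
qed

lemma bracket:
  assumes "1 < (y::real)"
  shows "\<exists>N. 2^N < y \<and> y \<le> 2^(Suc N)"
proof -
  obtain n where n: "y < 2^n" using real_arch_pow[of 2 y] by auto
  define N' where "N' = (LEAST n. y \<le> (2::real)^n)"
  have yN': "y \<le> 2^N'" unfolding N'_def by (rule LeastI[of _ n]) (use n in auto)
  have "N' \<noteq> 0"
  proof
    assume "N' = 0"
    with yN' assms show False by simp
  qed
  then obtain N where N: "N' = Suc N" by (cases N') auto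
  have "\<not> y \<le> 2^N" unfolding N'_def
    using not_less_Least[of N "\<lambda>n. y \<le> (2::real)^n"] N unfolding N'_def by simp
  then show ?thesis using yN' N by (intro exI[of _ N]) auto
qed

lemma Phi_up:
  assumes "0 \<le> y" "y \<le> 2^(Suc N)"
  shows "Phi y \<le> y powr p * 2 powr V N"
proof -
  have "Phi y = (\<Sum>j<Suc N. tm j y)"
  proof (rule Phi_eq)
    fix j assume "Suc N \<le> j"
    then have "(2::real)^(Suc N) \<le> 2^j" by (intro power_increasing) auto
    then show "y \<le> 2^j" using assms by simp
  qed
  also have "\<dots> \<le> (\<Sum>j<Suc N. w j * y powr p)"
  proof (intro sum_mono)
    fix j assume "j \<in> {..<Suc N}"
    have "(max 0 (y - 2^j)) powr p \<le> y powr p" using assms p1 by (intro powr_mono2) auto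
    then show "tm j y \<le> w j * y powr p" unfolding tm_def using w_nonneg by (intro mult_left_mono) auto
  qed
  also have "\<dots> = y powr p * 2 powr V N" using wsum[of N] by (simp add: sum_distrib_right[symmetric] mult.commute)
  finally show ?thesis .
qed

lemma Phi_low:
  assumes "1 \<le> M" "2^M < y"
  shows "(y/2) powr p * 2 powr V (M-1) \<le> Phi y"
proof -
  have My: "real M < y" using less_exp[of M] assms(2)
    by (metis of_nat_less_numeral_power_cancel_iff of_nat_numeral order.strict_trans)
  have "M \<le> nat \<lceil>y\<rceil>" using My by linarith
  have "(y/2) powr p * 2 powr V (M-1) = (\<Sum>j<M. w j * (y/2) powr p)"
    using wsum[of "M-1"] assms(1) by (simp add: sum_distrib_right[symmetric] mult.commute)
  also have "\<dots> \<le> (\<Sum>j<M. tm j y)"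
  proof (intro sum_mono)
    fix j assume j: "j \<in> {..<M}"
    have "(2::real)^j \<le> 2^(M-1)" using j by (intro power_increasing) auto
    moreover have "(2::real)^M = 2 * 2^(M-1)" using assms(1) by (metis Suc_diff_1 less_le_trans zero_less_one power_Suc)
    ultimately have "y/2 \<le> y - 2^j" using assms(2) by linarith
    then have "(y/2) powr p \<le> (max 0 (y - 2^j)) powr p" using p1 assms My by (intro powr_mono2) auto
    then show "w j * (y/2) powr p \<le> tm j y" unfolding tm_def using w_nonneg by (intro mult_left_mono) auto
  qed
  also have "\<dots> \<le> (\<Sum>j<nat \<lceil>y\<rceil>. tm j y)"
    using \<open>M \<le> nat \<lceil>y\<rceil>\<close> by (intro sum_mono2) (auto simp: tm_nonneg)
  also have "\<dots> = Phi y" by (simp add: Phi_def)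
  finally show ?thesis .
qed

lemma ratio_low:
  assumes M1: "1 \<le> M" and MN: "M \<le> N" and xyM: "2^M < x*y" "x*y \<le> 2^(Suc M)"
  and yN: "2^N < y" "y \<le> 2^(Suc N)" and x: "0 < x" "x \<le> 1"
  and D1: "V N - V (M-1) \<le> real (N - (M-1)) * a" and D2: "V N - V (M-1) \<le> real m"
  and a: "a = (1/2)^m" and m: "1 \<le> m"
  shows "RR a x \<le> Phi (x*y)/Phi y"
proof -
  define D where "D = V N - V (M-1)"
  have y0: "0 < y" using yN(1) by (metis less_trans zero_less_numeral zero_less_power)
  have ypos: "0 < Phi y" using yN(1) by (intro Phi_pos) (metis less_le_trans one_le_numeral one_le_power not_less)
  have a0: "0 < a" using a by simp
  have ahalf: "a \<le> 1/2"
  proof -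
    have "(1/2::real)^m \<le> (1/2)^1" using m by (intro power_decreasing) auto
    then show ?thesis using a by simp
  qed
  have h1: "(x*y/2) powr p * 2 powr V (M-1) \<le> Phi (x*y)" using Phi_low[OF M1 xyM(1)] by simp
  have h2: "Phi y \<le> y powr p * 2 powr V N" using Phi_up[of y N] y0 yN by simp
  have h3: "((x*y/2) powr p * 2 powr V (M-1)) / (y powr p * 2 powr V N) \<le> Phi (x*y)/Phi y"
    by (rule frac_le) (use h1 h2 ypos Phi_nonneg[of "x*y"] in auto)
  have h4: "((x*y/2) powr p * 2 powr V (M-1)) / (y powr p * 2 powr V N) = x powr p / 2 powr p * 2 powr (-D)"
  proof -
    have "(x*y/2) powr p = x powr p * y powr p / 2 powr p" using x y0 by (simp add: powr_mult powr_divide)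
    moreover have "2 powr V (M-1) / 2 powr V N = 2 powr (-D)" unfolding D_def by (simp add: powr_diff[symmetric])
    ultimately show ?thesis using y0 by (simp add: field_simps)
  qed
  have h5: "a \<le> 2 powr (-D)"
  proof -
    have "2 powr (- real m) \<le> 2 powr (-D)" using D2 unfolding D_def by (intro powr_mono) auto
    moreover have "2 powr (- real m) = a" using a by (simp add: powr_minus powr_realpow power_divide inverse_eq_divide)
    ultimately show ?thesis by simp
  qed
  have h6: "x powr a \<le> 2 * 2 powr (-D)"
  proof -
    have "x = (x*y)/y" using y0 by simp
    also have "\<dots> < 2^(Suc M) / 2^N" using xyM(2) yN(1) y0 x
      by (intro frac_less2) (auto intro: mult_pos_pos)
    also have "(2::real)^(Suc M) / 2^N = 2 powr (real (Suc M) - real N)"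
    proof -
      have "(2::real) powr (real (Suc M)) = 2^(Suc M)" by (rule powr_realpow) simp
      moreover have "(2::real) powr (real N) = 2^N" by (rule powr_realpow) simp
      ultimately show ?thesis by (simp only: powr_diff)
    qed
    finally have xl: "x < 2 powr (real (Suc M) - real N)" .
    have "x powr a \<le> (2 powr (real (Suc M) - real N)) powr a" using xl x a0 by (intro powr_mono2) auto
    also have "\<dots> = 2 powr ((real (Suc M) - real N) * a)" by (simp add: powr_powr)
    also have "\<dots> \<le> 2 powr (1 - D)"
    proof (intro powr_mono)
      have "real (N - (M-1)) = real N - real M + 1" using M1 MN by (simp add: of_nat_diff)
      then have "(real (Suc M) - real N) * a = 2 * a - real (N - (M-1)) * a" by (simp add: algebra_simps)
      then show "(real (Suc M) - real N) * a \<le> 1 - D" using D1 ahalf unfolding D_def by linarith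
    qed simp
    also have "\<dots> = 2 * 2 powr (-D)" by (simp add: powr_diff powr_minus divide_inverse)
    finally show ?thesis .
  qed
  have h7: "1 + a * ln x \<le> x powr a" using x exp_ge_add_one_self[of "a * ln x"] by (simp add: powr_def mult.commute)
  have h8: "max a (1 + a * ln x) / 2 \<le> 2 powr (-D)"
  proof -
    have "a / 2 \<le> 2 powr (-D)" using h5 a0 by simp
    moreover have "(1 + a * ln x) / 2 \<le> 2 powr (-D)" using h6 h7 by simp
    ultimately show ?thesis by (simp add: max_def)
  qed
  have kap_eq: "kap = 1 / 2 powr p / 2" unfolding kap_def by (simp add: powr_add)
  have "RR a x = x powr p / 2 powr p * (max a (1 + a * ln x) / 2)"
    unfolding RR_def kap_eq by (simp add: field_simps)
  also have "\<dots> \<le> x powr p / 2 powr p * 2 powr (-D)" using h8 by (intro mult_left_mono) auto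
  also have "\<dots> \<le> Phi (x*y)/Phi y" using h3 h4 by simp
  finally show ?thesis .
qed

lemma RR_le_x:
  assumes "a \<in> {0..1}" "x \<in> {0<..1}"
  shows "RR a x \<le> x"
proof -
  have "max a (1 + a * ln x) \<le> 1"
  proof -
    have "a * ln x \<le> 0" using assms by (intro mult_nonneg_nonpos) auto
    then show ?thesis using assms by simp
  qed
  moreover have "x powr p \<le> x"
  proof -
    have "x powr p \<le> x powr 1" using assms p1 by (intro powr_mono') auto
    then show ?thesis using assms by simp
  qed
  moreover have "0 \<le> max a (1 + a * ln x)" using assms by auto
  ultimately have "kap * x powr p * max a (1 + a * ln x) \<le> 1 * x * 1"
    using kap_le1 kap_pos assms(2) by (intro mult_mono) auto
  then show ?thesis unfolding RR_def by simp
qed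

lemma P2:
  assumes e: "e > 0"
  shows "\<exists>A>1. \<forall>y>A. \<exists>a\<in>{0..1}. \<forall>x\<in>{0<..1}. RR a x - e \<le> Phi (x*y)/Phi y"
proof -
  obtain k0 where k0: "(1/2::real)^k0 < e" using real_arch_pow_inv[OF e, of "1/2"] by auto
  define K where "K = SS k0 + gl k0"
  have A1: "(1::real) < 2^(Suc K)" by (rule one_less_power) auto
  show ?thesis
  proof (intro exI[of _ "2^(Suc K)"] conjI allI impI A1)
    fix y :: real assume yA: "2^(Suc K) < y"
    then have y1: "1 < y" using A1 by linarith
    obtain N where N: "2^N < y" "y \<le> 2^(Suc N)" using bracket[OF y1] by auto
    have "(2::real)^(Suc K) < 2^(Suc N)" using yA N by linarith
    then have KN: "K \<le> N" by simp
    obtain k where k: "k0 \<le> k" "SS k + gl k \<le> N" "N < SS (Suc k) + gl (Suc k)"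
      using zone_exists[of k0 N] KN unfolding K_def by auto
    have y0: "0 < y" using y1 by simp
    show "\<exists>a\<in>{0..1}. \<forall>x\<in>{0<..1}. RR a x - e \<le> Phi (x*y)/Phi y"
    proof (intro bexI[of _ "aa k"] ballI)
      show "aa k \<in> {0..1}" using aa_pos[of k] aa_le_half[of k] by auto
      fix x :: real assume x: "x \<in> {0<..1}"
      have rat0: "0 \<le> Phi (x*y)/Phi y" using P1[OF y1, of x] x by auto
      show "RR (aa k) x - e \<le> Phi (x*y)/Phi y"
      proof (cases "x*y \<le> 2^(Suc (SS k))")
        case True
        have "x = (x*y)/y" using y0 by simp
        also have "\<dots> \<le> 2^(Suc (SS k)) / 2^N" using True N(1) y0 x
          by (intro frac_le) auto
        also have "\<dots> \<le> 2^(Suc (SS k)) / 2^(SS k + gl k)" using k(2)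
          by (intro divide_left_mono power_increasing) auto
        also have "\<dots> = (1/2)^k" by (simp add: gl_def power_add power_divide)
        also have "\<dots> \<le> (1/2)^k0" using k(1) by (intro power_decreasing) auto
        finally have "x < e" using k0 by linarith
        moreover have "RR (aa k) x \<le> x" using RR_le_x[of "aa k" x] aa_pos[of k] aa_le_half[of k] x by auto
        ultimately show ?thesis using rat0 by linarith
      next
        case False
        then have xy1: "1 < x*y" by (metis less_le_trans not_le one_le_numeral one_le_power)
        obtain M where M: "2^M < x*y" "x*y \<le> 2^(Suc M)" using bracket[OF xy1] by auto
        have "(2::real)^(Suc (SS k)) < 2^(Suc M)" using False M(2) by linarith
        then have SM: "SS k < M" by simp
        have "x*y \<le> y" using x y0 by (simp add: mult_left_le_one_le)
        then have "(2::real)^M < 2^(Suc N)" using M(1) N(2) by linarith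
        then have "M < Suc N" by (rule power_less_imp_less_exp[rotated]) simp
        then have MN: "M \<le> N" by simp
        have zb: "V N - V (M-1) \<le> real (N - (M-1)) * aa k \<and> V N - V (M-1) \<le> real (mk k)"
          using SM MN k(3) by (intro zone_bound) auto
        have "RR (aa k) x \<le> Phi (x*y)/Phi y"
          using x zb SM by (intro ratio_low[OF _ MN M N, of _ "mk k"]) (auto simp: aa_def mk_def)
        then show ?thesis using e by linarith
      qed
    qed
  qed
qed

lemma dbound:
  fixes u z eta :: real
  assumes u: "0 \<le> u" "u \<le> z" and z: "1 \<le> z" and eta: "0 < eta" "eta \<le> 1"
  shows "u powr p - (max 0 (u - eta)) powr p \<le> p * eta * z powr p"
proof (cases "u \<le> eta")
  case True
  have "u powr p \<le> u powr 1" using u True eta p1 by (intro powr_mono') auto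
  also have "\<dots> \<le> eta" using u True by (cases "u = 0") auto
  also have "\<dots> \<le> p * eta * z powr p"
  proof -
    have "1 \<le> z powr p" using z p1 by (simp add: ge_one_powr_ge_zero)
    then have "1 * 1 \<le> p * z powr p" using p1 by (intro mult_mono) auto
    then show ?thesis using eta by (simp add: mult.assoc mult_le_cancel_left1)
  qed
  finally show ?thesis using True by simp
next
  case False
  then have u0: "0 < u" "0 < u - eta" using eta by auto
  have cv: "convex_on {0<..} (\<lambda>x::real. x powr p)" using p1 by (intro powr_convex) simp
  have d: "((\<lambda>x. x powr p) has_real_derivative p * u powr (p - 1)) (at u within {0<..})"
    using u0 by (auto intro!: derivative_eq_intros simp: powr_diff)
  have "(u - eta) powr p - u powr p \<ge> p * u powr (p - 1) * ((u - eta) - u)"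
    by (rule convex_on_imp_above_tangent[OF cv]) (use u0 d in \<open>auto simp: interior_open\<close>)
  then have "u powr p - (max 0 (u - eta)) powr p \<le> p * u powr (p - 1) * eta" using u0 by (simp add: algebra_simps)
  also have "\<dots> \<le> p * z powr p * eta"
  proof -
    have "u powr (p - 1) \<le> z powr (p - 1)" using u u0 p1 by (intro powr_mono2) auto
    also have "\<dots> \<le> z powr p" using z p1 by (intro powr_mono) auto
    finally show ?thesis using p1 eta by (intro mult_right_mono mult_left_mono) auto
  qed
  finally show ?thesis by (simp add: algebra_simps)
qed


definition Tm :: "nat \<Rightarrow> real \<Rightarrow> real" where
  "Tm m u = (max 0 u) powr p + (\<Sum>i<nm m. tau m i * (max 0 (u - 2^i)) powr p)"

lemma Tm_mono: "u \<le> v \<Longrightarrow> Tm m u \<le> Tm m v"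
  unfolding Tm_def using p1 tau_nonneg
  by (intro add_mono sum_mono mult_left_mono powr_mono2) auto

lemma Tm_ge: "0 \<le> u \<Longrightarrow> u powr p \<le> Tm m u"
  unfolding Tm_def using tau_nonneg by (simp add: sum_nonneg)

lemma Tm_one: "Tm m 1 = 1"
proof -
  have "\<And>i. max 0 (1 - (2::real)^i) = 0" by simp
  then show ?thesis unfolding Tm_def by simp
qed

lemma Tm_cont: "continuous_on UNIV (Tm m)"
  unfolding Tm_def using p1
  by (intro continuous_intros continuous_on_powr') auto

lemma Phi_block:
  assumes u: "0 \<le> u" "u \<le> 2^(nb k)"
  defines "B \<equiv> SS k + gl k"
  defines "s \<equiv> (2::real)^(Suc B)"
  defines "c0 \<equiv> 2 powr V B * s powr p"
  defines "eta \<equiv> (1/2::real)^(Suc (gl k))"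
  shows "c0 * (Tm (mk k) u - u powr p) + c0 * (max 0 (u - eta)) powr p \<le> Phi (s*u) \<and> Phi (s*u) \<le> c0 * Tm (mk k) u"
proof -
  define n where "n = nb k"
  have s0: "0 < s" unfolding s_def by simp
  have seta: "(2::real)^(SS k) = s * eta"
    unfolding s_def eta_def B_def by (simp add: power_add power_divide)
  have e0: "Phi (s*u) = (\<Sum>j<Suc B + n. tm j (s*u))"
  proof (rule Phi_eq)
    fix j assume j: "Suc B + n \<le> j"
    have "s * u \<le> s * 2^n" using u s0 unfolding n_def by simp
    also have "\<dots> = 2^(Suc B + n)" unfolding s_def by (simp add: power_add)
    also have "\<dots> \<le> 2^j" using j by (intro power_increasing) auto
    finally show "s * u \<le> 2^j" .
  qed
  have SB: "Suc (SS k) \<le> Suc B" unfolding B_def by simp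
  have split: "(\<Sum>j<Suc B + n. tm j (s*u)) = (\<Sum>j\<in>{0..<Suc (SS k)}. tm j (s*u)) + (\<Sum>j\<in>{Suc (SS k)..<Suc B}. tm j (s*u)) + (\<Sum>j\<in>{Suc B..<Suc B + n}. tm j (s*u))"
  proof -
    let ?f = "\<lambda>j. tm j (s*u)"
    have c1: "sum ?f {0..<Suc (SS k)} + sum ?f {Suc (SS k)..<Suc B} = sum ?f {0..<Suc B}"
      by (rule sum.atLeastLessThan_concat) (use SB in simp_all)
    have c2: "sum ?f {0..<Suc B} + sum ?f {Suc B..<Suc B + n} = sum ?f {0..<Suc B + n}"
      by (rule sum.atLeastLessThan_concat) simp_all
    show ?thesis using c1 c2 by (simp only: atLeast0LessThan[symmetric])
  qed
  have mid: "(\<Sum>j\<in>{Suc (SS k)..<Suc B}. tm j (s*u)) = 0"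
  proof (intro sum.neutral ballI)
    fix j assume "j \<in> {Suc (SS k)..<Suc B}"
    then have "w j = 0" unfolding B_def by (intro w_gap[of k j]) auto
    then show "tm j (s*u) = 0" by (simp add: tm_def)
  qed
  have last: "(\<Sum>j\<in>{Suc B..<Suc B + n}. tm j (s*u)) = c0 * (Tm (mk k) u - u powr p)"
  proof -
    have "(\<Sum>j\<in>{Suc B..<Suc B + n}. tm j (s*u)) = (\<Sum>i\<in>{0..<n}. tm (i + Suc B) (s*u))"
      using sum.shift_bounds_nat_ivl[of "\<lambda>j. tm j (s*u)" 0 "Suc B" n] by (simp add: add.commute)
    also have "\<dots> = (\<Sum>i\<in>{0..<n}. c0 * (tau (mk k) i * (max 0 (u - 2^i)) powr p))"
    proof (intro sum.cong refl)
      fix i assume i: "i \<in> {0..<n}"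
      have "w (i + Suc B) = 2 powr V B * tau (mk k) i"
        using w_blk[of i k] i unfolding n_def B_def by (simp add: add.commute)
      moreover have "max 0 (s * u - 2^(i + Suc B)) = s * max 0 (u - 2^i)"
      proof -
        have "(2::real)^(i + Suc B) = s * 2^i" unfolding s_def by (simp add: power_add)
        then have "s * u - 2^(i + Suc B) = s * (u - 2^i)" by (simp add: algebra_simps)
        then show ?thesis using s0 by (simp add: max_mult_distrib_left)
      qed
      moreover have "(s * max 0 (u - 2^i)) powr p = s powr p * (max 0 (u - 2^i)) powr p"
        using s0 by (simp add: powr_mult)
      ultimately show "tm (i + Suc B) (s*u) = c0 * (tau (mk k) i * (max 0 (u - 2^i)) powr p)"
        unfolding tm_def c0_def by simp
    qed
    also have "\<dots> = c0 * (Tm (mk k) u - u powr p)"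
      unfolding Tm_def using u by (simp add: sum_distrib_left n_def nb_nm atLeast0LessThan)
    finally show ?thesis .
  qed
  have old_lo: "c0 * (max 0 (u - eta)) powr p \<le> (\<Sum>j\<in>{0..<Suc (SS k)}. tm j (s*u))"
  proof -
    have "c0 * (max 0 (u - eta)) powr p = (\<Sum>j\<in>{0..<Suc (SS k)}. w j * (s powr p * (max 0 (u - eta)) powr p))"
      unfolding c0_def B_def using wsum_old[of k]
      by (simp add: sum_distrib_right[symmetric] atLeast0LessThan)
    also have "\<dots> \<le> (\<Sum>j\<in>{0..<Suc (SS k)}. tm j (s*u))"
    proof (intro sum_mono)
      fix j assume j: "j \<in> {0..<Suc (SS k)}"
      have pj: "(2::real)^j \<le> 2^(SS k)" using j by (intro power_increasing) auto
      have "s * max 0 (u - eta) = max 0 (s * u - 2^(SS k))"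
        using seta s0 by (simp add: max_mult_distrib_left right_diff_distrib)
      also have "\<dots> \<le> max 0 (s * u - 2^j)" using pj by (intro max.mono) auto
      finally have "s * max 0 (u - eta) \<le> max 0 (s * u - 2^j)" .
      then have "(s * max 0 (u - eta)) powr p \<le> (max 0 (s * u - 2^j)) powr p"
        using s0 p1 by (intro powr_mono2) auto
      then have "s powr p * (max 0 (u - eta)) powr p \<le> (max 0 (s * u - 2^j)) powr p"
        using s0 by (simp add: powr_mult)
      then show "w j * (s powr p * (max 0 (u - eta)) powr p) \<le> tm j (s*u)"
        unfolding tm_def using w_nonneg by (intro mult_left_mono) auto
    qed
    finally show ?thesis .
  qed
  have old_hi: "(\<Sum>j\<in>{0..<Suc (SS k)}. tm j (s*u)) \<le> c0 * u powr p"
  proof -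
    have "(\<Sum>j\<in>{0..<Suc (SS k)}. tm j (s*u)) \<le> (\<Sum>j\<in>{0..<Suc (SS k)}. w j * (s powr p * u powr p))"
    proof (intro sum_mono)
      fix j assume j: "j \<in> {0..<Suc (SS k)}"
      have "max 0 (s * u - 2^j) \<le> s * u" using s0 u by simp
      then have "(max 0 (s * u - 2^j)) powr p \<le> (s * u) powr p" using p1 by (intro powr_mono2) auto
      then have "(max 0 (s * u - 2^j)) powr p \<le> s powr p * u powr p" using s0 u by (simp add: powr_mult)
      then show "tm j (s*u) \<le> w j * (s powr p * u powr p)"
        unfolding tm_def using w_nonneg by (intro mult_left_mono) auto
    qed
    also have "\<dots> = c0 * u powr p"
      unfolding c0_def B_def using wsum_old[of k]
      by (simp add: sum_distrib_right[symmetric] atLeast0LessThan)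
    finally show ?thesis .
  qed
  show ?thesis using e0 split mid last old_lo old_hi by (simp add: algebra_simps)
qed


lemma Hm_approx:
  assumes pe: "p * ((1/2::real)^(Suc (gl k))) \<le> 1/2" and x: "x \<in> {0..1}"
  shows "\<bar>Phi (x * ((2::real)^(Suc (SS k + gl k)) * 2^(nb k))) / Phi ((2::real)^(Suc (SS k + gl k)) * 2^(nb k))
          - Tm (mk k) (x * 2^(nb k)) / Tm (mk k) (2^(nb k))\<bar> \<le> 2 * (p * ((1/2::real)^(Suc (gl k))))"
proof -
  define B where "B = SS k + gl k"
  define s where "s = (2::real)^(Suc B)"
  define c0 where "c0 = 2 powr V B * s powr p"
  define eta where "eta = (1/2::real)^(Suc (gl k))"
  define z where "z = (2::real)^(nb k)"
  define u where "u = x * z"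
  have z1: "1 \<le> z" unfolding z_def by simp
  have u: "0 \<le> u" "u \<le> z" using x z1 unfolding u_def by (auto simp: mult_left_le_one_le)
  have s0: "0 < s" unfolding s_def by simp
  have c0: "0 < c0" unfolding c0_def using s0 by simp
  have eta1: "eta \<le> 1" unfolding eta_def by (rule power_le_one) auto
  have eta: "0 < eta" "eta \<le> 1" using eta1 unfolding eta_def by auto
  have bu: "c0 * (Tm (mk k) u - u powr p) + c0 * (max 0 (u - eta)) powr p \<le> Phi (s*u) \<and> Phi (s*u) \<le> c0 * Tm (mk k) u"
    using Phi_block[of u k] u unfolding z_def B_def s_def c0_def eta_def by simp
  have bz: "c0 * (Tm (mk k) z - z powr p) + c0 * (max 0 (z - eta)) powr p \<le> Phi (s*z) \<and> Phi (s*z) \<le> c0 * Tm (mk k) z"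
    using Phi_block[of z k] z1 unfolding z_def B_def s_def c0_def eta_def by simp
  have Y0: "z powr p \<le> Tm (mk k) z" using z1 by (intro Tm_ge) simp
  have Y0p: "0 < Tm (mk k) z" using Y0 z1 by (smt (verit) powr_gt_zero)
  have du: "u powr p - (max 0 (u - eta)) powr p \<le> p * eta * Tm (mk k) z"
  proof -
    have "u powr p - (max 0 (u - eta)) powr p \<le> p * eta * z powr p" by (rule dbound) (use u z1 eta in auto)
    also have "\<dots> \<le> p * eta * Tm (mk k) z" using Y0 p1 eta by (intro mult_left_mono) auto
    finally show ?thesis .
  qed
  have dz: "z powr p - (max 0 (z - eta)) powr p \<le> p * eta * Tm (mk k) z"
  proof -
    have "z powr p - (max 0 (z - eta)) powr p \<le> p * eta * z powr p" by (rule dbound) (use z1 eta in auto)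
    also have "\<dots> \<le> p * eta * Tm (mk k) z" using Y0 p1 eta by (intro mult_left_mono) auto
    finally show ?thesis .
  qed
  have X1: "c0 * (Tm (mk k) u - p * eta * Tm (mk k) z) \<le> Phi (s*u)"
  proof -
    have h: "c0 * (u powr p - (max 0 (u - eta)) powr p) \<le> c0 * (p * eta * Tm (mk k) z)"
      using du c0 by (intro mult_left_mono) auto
    have e: "c0 * (u powr p - (max 0 (u - eta)) powr p) = c0 * u powr p - c0 * (max 0 (u - eta)) powr p"
      "c0 * (Tm (mk k) u - p * eta * Tm (mk k) z) = c0 * Tm (mk k) u - c0 * (p * eta * Tm (mk k) z)"
      "c0 * (Tm (mk k) u - u powr p) = c0 * Tm (mk k) u - c0 * u powr p"
      by (simp_all add: right_diff_distrib)
    have "c0 * (Tm (mk k) u - p * eta * Tm (mk k) z) \<le> c0 * (Tm (mk k) u - u powr p) + c0 * (max 0 (u - eta)) powr p"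
      using h[unfolded e(1)] unfolding e(2) e(3) by linarith
    then show ?thesis using bu by linarith
  qed
  have Y1: "c0 * (Tm (mk k) z - p * eta * Tm (mk k) z) \<le> Phi (s*z)"
  proof -
    have h: "c0 * (z powr p - (max 0 (z - eta)) powr p) \<le> c0 * (p * eta * Tm (mk k) z)"
      using dz c0 by (intro mult_left_mono) auto
    have e: "c0 * (z powr p - (max 0 (z - eta)) powr p) = c0 * z powr p - c0 * (max 0 (z - eta)) powr p"
      "c0 * (Tm (mk k) z - p * eta * Tm (mk k) z) = c0 * Tm (mk k) z - c0 * (p * eta * Tm (mk k) z)"
      "c0 * (Tm (mk k) z - z powr p) = c0 * Tm (mk k) z - c0 * z powr p"
      by (simp_all add: right_diff_distrib)
    have "c0 * (Tm (mk k) z - p * eta * Tm (mk k) z) \<le> c0 * (Tm (mk k) z - z powr p) + c0 * (max 0 (z - eta)) powr p"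
      using h[unfolded e(1)] unfolding e(2) e(3) by linarith
    then show ?thesis using bz by linarith
  qed
  have "\<bar>Phi (s*u) / Phi (s*z) - Tm (mk k) u / Tm (mk k) z\<bar> \<le> 2 * (p * eta)"
  proof (rule approx_core[OF c0])
    show "0 \<le> Tm (mk k) u" using Tm_ge[OF u(1), of "mk k"] by (smt (verit) powr_ge_zero)
    show "Tm (mk k) u \<le> Tm (mk k) z" using u by (intro Tm_mono)
    show "0 < Tm (mk k) z" by (rule Y0p)
    show "0 \<le> p * eta" using p1 eta by simp
    show "p * eta \<le> 1/2" using pe unfolding eta_def .
    show "c0 * (Tm (mk k) u - p * eta * Tm (mk k) z) \<le> Phi (s*u)" by (rule X1)
    show "Phi (s*u) \<le> c0 * Tm (mk k) u" using bu by simp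
    show "0 \<le> Phi (s*u)" by (rule Phi_nonneg)
    show "c0 * (Tm (mk k) z - p * eta * Tm (mk k) z) \<le> Phi (s*z)" by (rule Y1)
    show "Phi (s*z) \<le> c0 * Tm (mk k) z" using bz by simp
  qed
  moreover have "Phi (x * (s * z)) = Phi (s * u)" unfolding u_def by (simp only: mult.left_commute)
  ultimately have "\<bar>Phi (x * (s * z)) / Phi (s*z) - Tm (mk k) (x * z) / Tm (mk k) z\<bar> \<le> 2 * (p * eta)"
    unfolding u_def by simp
  then show ?thesis unfolding s_def z_def eta_def B_def .
qed

lemma P3:
  assumes C: "C > 0"
  shows "\<exists>H\<in>E_F Phi. \<exists>t\<in>{0<..1}. H t < t powr p / C"
proof -
  have cp: "0 < 1 / (C * 2 powr p)" using C by simp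
  obtain m0 where m0: "(1/2::real)^m0 < 1 / (C * 2 powr p)" using real_arch_pow_inv[OF cp, of "1/2"] by auto
  define m where "m = Suc m0"
  have mle: "(1/2::real)^m \<le> (1/2)^m0" unfolding m_def by (intro power_decreasing) auto
  define n where "n = nm m"
  define z where "z = (2::real)^n"
  define t where "t = (1/2::real)^n"
  define H where "H = restr01 (\<lambda>x. Tm m (x * z) / Tm m z)"
  have z1: "1 \<le> z" unfolding z_def by simp
  have tz: "t * z = 1" unfolding t_def z_def by (simp add: power_mult_distrib[symmetric])
  have t01: "t \<in> {0<..1}" unfolding t_def by (auto simp: power_le_one)
  have Tz: "(z/2) powr p * 2^m \<le> Tm m z"
  proof -
    have an: "am m * real n = real m" unfolding am_def n_def nm_def by (simp add: power_divide)
    have "(\<Sum>i<n. tau m i * (z/2) powr p) \<le> (\<Sum>i<n. tau m i * (max 0 (z - 2^i)) powr p)"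
    proof (intro sum_mono mult_left_mono tau_nonneg)
      fix i assume i: "i \<in> {..<n}"
      have "(2::real)^i \<le> 2^(n-1)" using i by (intro power_increasing) auto
      moreover have "z = 2 * 2^(n-1)" using i unfolding z_def by (metis Suc_diff_1 lessThan_iff not_less0 power_Suc gr0I)
      ultimately have "z/2 \<le> z - 2^i" by linarith
      then show "(z/2) powr p \<le> (max 0 (z - 2^i)) powr p" using z1 p1 by (intro powr_mono2) auto
    qed
    moreover have "(\<Sum>i<n. tau m i * (z/2) powr p) = (z/2) powr p * (2^m - 1)"
      using tau_sum[of m n] an by (simp add: sum_distrib_right[symmetric] mult.commute powr_realpow)
    moreover have "(z/2) powr p \<le> z powr p" using z1 p1 by (intro powr_mono2) auto
    ultimately have "(z/2) powr p + (z/2) powr p * (2^m - 1) \<le> Tm m z"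
      unfolding Tm_def n_def using z1 by simp
    then show ?thesis by (simp add: algebra_simps)
  qed
  have Hm_t: "H t < t powr p / C"
  proof -
    have "H t = 1 / Tm m z" unfolding H_def restr01_def using t01 tz Tm_one[of m]
      by (simp add: mult.commute)
    also have "\<dots> \<le> 1 / ((z/2) powr p * 2^m)"
    proof -
      have q: "0 < (z/2) powr p * 2^m" using z1 by simp
      then have "0 < Tm m z" using Tz by linarith
      then show ?thesis using Tz q by (intro divide_left_mono) auto
    qed
    also have "\<dots> = t powr p * (2 powr p * (1/2)^m)"
    proof -
      have "t powr p * z powr p = (t*z) powr p" using t01 z1 by (simp add: powr_mult)
      then have "t powr p * z powr p = 1" using tz by simp
      then show ?thesis using z1 t01 by (simp add: powr_divide field_simps power_divide)
    qed
    also have "\<dots> < t powr p * (1 / C)"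
    proof -
      have "(1/2::real)^m < 1 / (C * 2 powr p)" using m0 mle by linarith
      then have "2 powr p * (1/2)^m < 2 powr p * (1 / (C * 2 powr p))" by (intro mult_strict_left_mono) auto
      also have "\<dots> = 1 / C" by simp
      finally have "2 powr p * (1/2)^m < 1 / C" .
      moreover have "0 < t powr p" using t01 by simp
      ultimately show ?thesis by (intro mult_strict_left_mono) auto
    qed
    finally show ?thesis by simp
  qed
  have HC: "H \<in> C01"
  proof -
    have "0 < (z/2) powr p * 2^m" using z1 by simp
    then have "0 < Tm m z" using Tz by linarith
    then have "continuous_on {0..1} (\<lambda>x. Tm m (x * z) / Tm m z)"
      by (intro continuous_intros continuous_on_compose2[OF Tm_cont]) auto
    then have "continuous_on {0..1} H" unfolding H_def restr01_def by (rule continuous_on_cong[THEN iffD1, rotated 2]) auto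
    then show ?thesis unfolding C01_def H_def restr01_def by auto
  qed
  have "H \<in> E_F Phi"
    unfolding E_F_def
  proof
    fix A :: real assume A: "A \<in> {0<..}"
    show "H \<in> E_FA Phi A"
      unfolding E_FA_def sup_closure_def
    proof (intro CollectI conjI allI impI HC)
      fix e :: real assume e: "0 < e"
      have ep: "0 < min e 1 / (2 * p)" using e p1 by simp
      obtain r where r: "(1/2::real)^r < min e 1 / (2 * p)" using real_arch_pow_inv[OF ep, of "1/2"] by auto
      define k where "k = prod_encode (m0, max r (nat \<lceil>A\<rceil>))"
      have mk: "mk k = m" unfolding k_def mk_def m_def by simp
      have kr: "r \<le> k" "nat \<lceil>A\<rceil> \<le> k" using le_prod_encode_2[of "max r (nat \<lceil>A\<rceil>)" m0] unfolding k_def by auto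
      define eta where "eta = (1/2::real)^(Suc (gl k))"
      have etar: "eta \<le> (1/2)^r" unfolding eta_def using kr by (intro power_decreasing) (auto simp: gl_def)
      have pe2: "2 * (p * eta) < min e 1"
      proof -
        have "2 * (p * eta) \<le> 2 * (p * (1/2)^r)" using etar p1 by simp
        also have "\<dots> < min e 1" using r p1 by (simp add: field_simps)
        finally show ?thesis .
      qed
      define y where "y = (2::real)^(Suc (SS k + gl k)) * 2^(nb k)"
      have yA: "A < y"
      proof -
        have "A \<le> real k" using kr by linarith
        also have "\<dots> < 2^k" using less_exp[of k] by (metis of_nat_less_numeral_power_cancel_iff of_nat_numeral)
        also have "(2::real)^k \<le> 2^(Suc (SS k + gl k))" using SS_ge[of k] by (intro power_increasing) auto
        also have "\<dots> \<le> y" unfolding y_def by simp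
        finally show ?thesis .
      qed
      show "\<exists>g\<in>{restr01 (\<lambda>x. Phi (x * y) / Phi y) |y. A < y}. \<forall>x\<in>{0..1}. \<bar>H x - g x\<bar> < e"
      proof (intro bexI[of _ "restr01 (\<lambda>x. Phi (x * y) / Phi y)"] ballI)
        fix x :: real assume x: "x \<in> {0..1}"
        have "\<bar>Phi (x * y) / Phi y - Tm (mk k) (x * 2^(nb k)) / Tm (mk k) (2^(nb k))\<bar> \<le> 2 * (p * eta)"
          unfolding y_def eta_def using pe2 x by (intro Hm_approx) (auto simp: eta_def)
        moreover have "nb k = n" unfolding n_def nb_nm mk ..
        ultimately have "\<bar>Phi (x * y) / Phi y - Tm m (x * z) / Tm m z\<bar> < e" using pe2 mk unfolding z_def by simp
        then show "\<bar>H x - restr01 (\<lambda>x. Phi (x * y) / Phi y) x\<bar> < e" using x unfolding H_def restr01_def by simp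
      qed (use yA in auto)
    qed
  qed
  then show ?thesis using Hm_t t01 by blast
qed

end

theorem mainTheorem2:
  fixes p :: real
  assumes "1 < p"
  shows "\<exists>\<Phi>. orlicz \<Phi> \<and> equiv_each (C_F \<Phi>) (\<lambda>t. t powr p)
              \<and> \<not> equiv_unif (E_F \<Phi>) (\<lambda>t. t powr p)"
  by (rule abstract_main[OF assms Phi_orlicz[OF assms]]) (use assms P1 P2 P3 in auto)

end
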